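(* Let $X=\{x_1,\ldots,x_n\}$ be a finite set and $k\ge 2$. For every set of medoids $M\subseteq X$ with $|M|=k$, there exists a dissimilarity $d$ on $X$ such that $M=\operatorname{arg\,max}_{M'}\tilde{S}(X,d,M')$, where $M'$ ranges over all subsets of $X$ of size $k$; that is, $M$ is the unique maximizer of the Average Medoid Silhouette (richness).
   Context: For a dissimilarity $d: X\times X\to\mathbb{R}$ and a set of medoids $M\subseteq X$, let $d_1(i)$ denote the distance from $x_i$ to its closest medoid in $M$ and $d_2(i)$ the distance to its second closest medoid in $M$. The Medoid Silhouette of $x_i$ is $\tilde{s}_i(X,d,M)=1-\frac{d_1(i)}{d_2(i)}$, with the convention $\tilde{s}_i=1$ when $d_1(i)=d_2(i)=0$; the Average Medoid Silhouette is $\tilde{S}(X,d,M)=\frac{1}{n}\sum_{i=1}^n\tilde{s}_i(X,d,M)$. *)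

theory Defs
  imports Main Complex_Main
begin

definition dissimilarity :: "'a set \<Rightarrow> ('a \<Rightarrow> 'a \<Rightarrow> real) \<Rightarrow> bool" where
  "dissimilarity X d \<longleftrightarrow>
     (\<forall>x\<in>X. \<forall>y\<in>X. d x y \<ge> 0 \<and> d x y = d y x) \<and> (\<forall>x\<in>X. d x x = 0)"

definition dist1 :: "('a \<Rightarrow> 'a \<Rightarrow> real) \<Rightarrow> 'a set \<Rightarrow> 'a \<Rightarrow> real" where
  "dist1 d M x = Min ((\<lambda>m. d x m) ` M)"

text \<open>Distance to the second closest medoid (second smallest value of the
  multiset of distances to the medoids, i.e. the minimum over pairs of distinct
  medoids of the larger of the two distances).\<close>
definition dist2 :: "('a \<Rightarrow> 'a \<Rightarrow> real) \<Rightarrow> 'a set \<Rightarrow> 'a \<Rightarrow> real" where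
  "dist2 d M x = Min {max (d x a) (d x b) | a b. a \<in> M \<and> b \<in> M \<and> a \<noteq> b}"

definition medoid_silhouette :: "('a \<Rightarrow> 'a \<Rightarrow> real) \<Rightarrow> 'a set \<Rightarrow> 'a \<Rightarrow> real" where
  "medoid_silhouette d M x =
     (if dist1 d M x = 0 \<and> dist2 d M x = 0 then 1
      else 1 - dist1 d M x / dist2 d M x)"

definition avg_medoid_silhouette :: "'a set \<Rightarrow> ('a \<Rightarrow> 'a \<Rightarrow> real) \<Rightarrow> 'a set \<Rightarrow> real" where
  "avg_medoid_silhouette X d M = (\<Sum>x\<in>X. medoid_silhouette d M x) / real (card X)"

end

theory Submission
  imports Defs
begin

lemma dist1_le: "finite S \<Longrightarrow> y \<in> S \<Longrightarrow> dist1 d S x \<le> d x y"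
  unfolding dist1_def by (rule Min_le) auto

lemma dist1_ge: "finite S \<Longrightarrow> S \<noteq> {} \<Longrightarrow> (\<And>y. y \<in> S \<Longrightarrow> c \<le> d x y) \<Longrightarrow> c \<le> dist1 d S x"
  unfolding dist1_def by (subst Min_ge_iff) auto

lemma dist2_fin: "finite S \<Longrightarrow> finite {max (d x a) (d x b) | a b. a \<in> S \<and> b \<in> S \<and> a \<noteq> b}"
proof -
  assume "finite S"
  have "{max (d x a) (d x b) | a b. a \<in> S \<and> b \<in> S \<and> a \<noteq> b} \<subseteq> (\<lambda>(a,b). max (d x a) (d x b)) ` (S \<times> S)"
    by auto
  then show ?thesis using \<open>finite S\<close> by (meson finite_SigmaI finite_imageI finite_subset)
qed

lemma dist2_le: "finite S \<Longrightarrow> a \<in> S \<Longrightarrow> b \<in> S \<Longrightarrow> a \<noteq> b \<Longrightarrow> dist2 d S x \<le> max (d x a) (d x b)"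
  unfolding dist2_def by (rule Min_le) (auto intro: dist2_fin)

lemma dist2_ge:
  assumes fS: "finite S" and a0: "a0 \<in> S" and b0: "b0 \<in> S" and ab0: "a0 \<noteq> b0"
    and H: "\<And>a b. a \<in> S \<Longrightarrow> b \<in> S \<Longrightarrow> a \<noteq> b \<Longrightarrow> c \<le> max (d x a) (d x b)"
  shows "c \<le> dist2 d S x"
  unfolding dist2_def
proof (rule Min.boundedI)
  show "finite {max (d x a) (d x b) | a b. a \<in> S \<and> b \<in> S \<and> a \<noteq> b}" using dist2_fin[OF fS] .
  show "{max (d x a) (d x b) | a b. a \<in> S \<and> b \<in> S \<and> a \<noteq> b} \<noteq> {}" using a0 b0 ab0 by blast
  fix v assume "v \<in> {max (d x a) (d x b) | a b. a \<in> S \<and> b \<in> S \<and> a \<noteq> b}"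
  then obtain a b where "a \<in> S" "b \<in> S" "a \<noteq> b" "v = max (d x a) (d x b)" by blast
  then show "c \<le> v" using H by simp
qed

lemma card2_obtain:
  assumes "finite S" "card S \<ge> 2"
  obtains a b where "a \<in> S" "b \<in> S" "a \<noteq> b"
proof -
  have "S \<noteq> {}" using assms by auto
  then obtain a where a: "a \<in> S" by auto
  have "card (S - {a}) > 0" using assms a by auto
  then have "S - {a} \<noteq> {}" using card_gt_0_iff by blast
  then obtain b where "b \<in> S - {a}" by auto
  then show ?thesis using a that by auto
qed

theorem theorem3:
  fixes X M :: "'a set" and k :: nat
  assumes "finite X" and "k \<ge> 2" and "M \<subseteq> X" and "card M = k"
  shows "\<exists>d. dissimilarity X d \<and>
           {M'. M' \<subseteq> X \<and> card M' = k \<and>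
                (\<forall>M''. M'' \<subseteq> X \<and> card M'' = k \<longrightarrow>
                   avg_medoid_silhouette X d M'' \<le> avg_medoid_silhouette X d M')} = {M}"
proof -
  have finM: "finite M" using assms finite_subset by blast
  obtain m0 m1 where m0: "m0 \<in> M" and m1: "m1 \<in> M" and m01: "m0 \<noteq> m1"
  proof -
    have "card M \<ge> 2" using assms by simp
    show ?thesis by (rule card2_obtain[OF finM \<open>card M \<ge> 2\<close>]) (rule that)
  qed
  define d :: "'a \<Rightarrow> 'a \<Rightarrow> real" where
    "d = (\<lambda>x y. if x = y then 0 else if (x = m0 \<and> y = m1) \<or> (x = m1 \<and> y = m0) then 2
          else if (x = m0 \<and> y \<notin> M) \<or> (y = m0 \<and> x \<notin> M) then 1 else 3)"
  have dsym: "d x y = d y x" for x y unfolding d_def by auto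
  have dxx: "d x x = 0" for x unfolding d_def by auto
  have dne: "x \<noteq> y \<Longrightarrow> 1 \<le> d x y \<and> d x y \<le> 3" for x y unfolding d_def by auto
  have dnn: "0 \<le> d x y" for x y unfolding d_def by auto
  have dM: "x \<in> M \<Longrightarrow> x \<noteq> m0 \<Longrightarrow> x \<noteq> y \<Longrightarrow> 2 \<le> d x y" for x y unfolding d_def by auto
  have dout: "x \<notin> M \<Longrightarrow> y \<in> M \<Longrightarrow> y \<noteq> m0 \<Longrightarrow> d x y = 3" for x y
    unfolding d_def using m0 by auto
  have d01: "d m0 m1 = 2" unfolding d_def using m01 by auto
  have d0z: "z \<notin> M \<Longrightarrow> d m0 z = 1" for z unfolding d_def using m0 m1 by auto
  have diss: "dissimilarity X d" unfolding dissimilarity_def using dsym dxx dnn by auto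
  have inS: "medoid_silhouette d S x = 1" if "finite S" "x \<in> S" for S x
  proof -
    have "dist1 d S x = 0"
    proof (rule antisym)
      show "dist1 d S x \<le> 0" using dist1_le[OF that, of d x] dxx[of x] by simp
      show "0 \<le> dist1 d S x" using that by (intro dist1_ge) (auto simp: dnn)
    qed
    then show ?thesis unfolding medoid_silhouette_def by auto
  qed
  have outS: "medoid_silhouette d S x = 1 - dist1 d S x / dist2 d S x
      \<and> 1 \<le> dist1 d S x \<and> 0 < dist2 d S x \<and> dist2 d S x \<le> 3"
    if hS: "finite S" "card S \<ge> 2" "x \<notin> S" for S x
  proof -
    obtain a b where ab: "a \<in> S" "b \<in> S" "a \<noteq> b" using card2_obtain[OF hS(1,2)] by blast
    have S0: "S \<noteq> {}" using ab by auto
    have d1: "1 \<le> dist1 d S x"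
    proof (rule dist1_ge[OF hS(1) S0])
      fix y assume "y \<in> S" then have "x \<noteq> y" using hS(3) by auto
      then show "1 \<le> d x y" using dne by blast
    qed
    have "d x a \<le> 3" "d x b \<le> 3" using dne[of x a] dne[of x b] ab hS(3) by auto
    then have d2: "dist2 d S x \<le> 3" using dist2_le[OF hS(1) ab, of d x] by simp
    have d2p: "1 \<le> dist2 d S x"
    proof (rule dist2_ge[OF hS(1) ab])
      fix a b assume "a \<in> S" "b \<in> S" "a \<noteq> b"
      then have "x \<noteq> a" using hS(3) by auto
      then show "1 \<le> max (d x a) (d x b)" using dne[of x a] by (simp add: le_max_iff_disj)
    qed
    show ?thesis unfolding medoid_silhouette_def using d1 d2 d2p by auto
  qed
  have le23: "medoid_silhouette d S x \<le> 2/3" if "finite S" "card S \<ge> 2" "x \<notin> S" for S x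
  proof -
    from outS[OF that] have h: "medoid_silhouette d S x = 1 - dist1 d S x / dist2 d S x"
      "1 \<le> dist1 d S x" "0 < dist2 d S x" "dist2 d S x \<le> 3" by auto
    have "1/3 \<le> dist1 d S x / dist2 d S x" using h(2-4) by (simp add: field_simps)
    then show ?thesis using h(1) by simp
  qed
  have lt23: "medoid_silhouette d S x < 2/3"
    if "finite S" "card S \<ge> 2" "x \<notin> S" "2 \<le> dist1 d S x \<or> dist2 d S x \<le> 2" for S x
  proof -
    from outS[OF that(1-3)] have h: "medoid_silhouette d S x = 1 - dist1 d S x / dist2 d S x"
      "1 \<le> dist1 d S x" "0 < dist2 d S x" "dist2 d S x \<le> 3" by auto
    have "1/3 < dist1 d S x / dist2 d S x" using h(2-4) that(4) by (auto simp add: field_simps)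
    then show ?thesis using h(1) by simp
  qed
  have onM: "medoid_silhouette d M x = 2/3" if "x \<notin> M" for x
  proof -
    have k2: "card M \<ge> 2" using assms by simp
    from outS[OF finM k2 that] have h: "medoid_silhouette d M x = 1 - dist1 d M x / dist2 d M x" by auto
    have e1: "dist1 d M x = 1"
    proof (rule antisym)
      show "dist1 d M x \<le> 1" using dist1_le[OF finM m0, of d x] d0z[OF that] dsym[of x m0] by simp
      show "1 \<le> dist1 d M x" using outS[OF finM k2 that] by auto
    qed
    have e2: "dist2 d M x = 3"
    proof (rule antisym)
      show "dist2 d M x \<le> 3" using outS[OF finM k2 that] by auto
      show "3 \<le> dist2 d M x"
      proof (rule dist2_ge[OF finM m0 m1 m01])
        fix a b assume ab: "a \<in> M" "b \<in> M" "a \<noteq> b"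
        show "3 \<le> max (d x a) (d x b)"
        proof (cases "a = m0")
          case True then have "b \<noteq> m0" using ab by auto
          then show ?thesis using dout[OF that ab(2)] by simp
        next
          case False then show ?thesis using dout[OF that ab(1)] by simp
        qed
      qed
    qed
    show ?thesis using h e1 e2 by simp
  qed
  define F where "F S = (\<Sum>x\<in>X. medoid_silhouette d S x)" for S
  define G where "G S = (\<Sum>x\<in>X. if x \<in> S then 1 else (2/3::real))" for S
  have Gval: "G S = real k + (real (card X) - real k) * (2/3)" if "S \<subseteq> X" "card S = k" for S
  proof -
    have fS: "finite S" using that assms finite_subset by blast
    have "G S = (\<Sum>x\<in>X \<inter> {x. x \<in> S}. 1) + (\<Sum>x\<in>X \<inter> - {x. x \<in> S}. 2/3)"
      unfolding G_def by (rule sum.If_cases) (rule assms(1))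
    also have "X \<inter> {x. x \<in> S} = S" using that by auto
    also have "X \<inter> - {x. x \<in> S} = X - S" by auto
    also have "card (X - S) = card X - card S" using card_Diff_subset[OF fS that(1)] .
    moreover have "card S \<le> card X" using card_mono[OF assms(1) that(1)] .
    ultimately show ?thesis using that by (simp add: of_nat_diff)
  qed
  have FM: "F M = G M" unfolding F_def G_def
    by (rule sum.cong) (auto simp: inS[OF finM] onM)
  have Fle: "F S \<le> G S" if "S \<subseteq> X" "card S = k" for S
  proof -
    have fS: "finite S" using that assms finite_subset by blast
    have k2: "card S \<ge> 2" using that assms by simp
    show ?thesis unfolding F_def G_def
    proof (rule sum_mono)
      fix x show "medoid_silhouette d S x \<le> (if x \<in> S then 1 else 2 / 3)"
        using inS[OF fS, of x] le23[OF fS k2, of x] by (cases "x \<in> S") auto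
    qed
  qed
  have Flt: "F S < G S" if "S \<subseteq> X" "card S = k" "S \<noteq> M" for S
  proof -
    have fS: "finite S" using that assms finite_subset by blast
    have k2: "card S \<ge> 2" using that assms by simp
    have "\<exists>x\<in>X. x \<notin> S \<and> (2 \<le> dist1 d S x \<or> dist2 d S x \<le> 2)"
    proof -
      have "\<not> M \<subseteq> S"
      proof
        assume "M \<subseteq> S"
        then have "M = S" using card_subset_eq[OF fS \<open>M \<subseteq> S\<close>] that(2) assms(4) by simp
        then show False using that by simp
      qed
      then obtain m where m: "m \<in> M" "m \<notin> S" by auto
      have S0: "S \<noteq> {}" using k2 by auto
      have gen: "2 \<le> dist1 d S y" if "y \<in> M" "y \<noteq> m0" "y \<notin> S" for y
      proof (rule dist1_ge[OF fS S0])
        fix z assume "z \<in> S" then have "y \<noteq> z" using that(3) by auto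
        then show "2 \<le> d y z" using dM[OF that(1,2)] by blast
      qed
      show ?thesis
      proof (cases "m = m0")
        case False then show ?thesis using gen m assms(3) by blast
      next
        case True
        show ?thesis
        proof (cases "m1 \<in> S")
          case False then show ?thesis using gen[OF m1] m01 m1 assms(3) by auto
        next
          case m1S: True
          have "\<not> S \<subseteq> M"
          proof
            assume "S \<subseteq> M"
            then have "S = M" using card_subset_eq[OF finM \<open>S \<subseteq> M\<close>] that(2) assms(4) by simp
            then show False using that by simp
          qed
          then obtain z where z: "z \<in> S" "z \<notin> M" by auto
          have "z \<noteq> m1" using z m1 by auto
          then have "dist2 d S m0 \<le> max (d m0 z) (d m0 m1)" using dist2_le[OF fS z(1) m1S] by auto
          then have "dist2 d S m0 \<le> 2" using d0z[OF z(2)] d01 by simp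
          then show ?thesis using True m assms(3) by auto
        qed
      qed
    qed
    then obtain x where x: "x \<in> X" "x \<notin> S" "2 \<le> dist1 d S x \<or> dist2 d S x \<le> 2" by blast
    show ?thesis unfolding F_def G_def
    proof (rule sum_strict_mono_ex1[OF assms(1)])
      show "\<forall>x\<in>X. medoid_silhouette d S x \<le> (if x \<in> S then 1 else 2 / 3)"
      proof
        fix x show "medoid_silhouette d S x \<le> (if x \<in> S then 1 else 2 / 3)"
          using inS[OF fS, of x] le23[OF fS k2, of x] by (cases "x \<in> S") auto
      qed
      show "\<exists>a\<in>X. medoid_silhouette d S a < (if a \<in> S then 1 else 2 / 3)"
        using x lt23[OF fS k2] by auto
    qed
  qed
  have cX: "real (card X) > 0"
  proof -
    have "M \<noteq> {}" using assms by auto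
    then have "X \<noteq> {}" using assms by auto
    then show ?thesis using assms(1) by (simp add: card_gt_0_iff)
  qed
  have avg: "avg_medoid_silhouette X d S = F S / real (card X)" for S
    unfolding avg_medoid_silhouette_def F_def ..
  have GM: "\<And>S. S \<subseteq> X \<Longrightarrow> card S = k \<Longrightarrow> G S = G M"
    using Gval assms by simp
  have le: "avg_medoid_silhouette X d S \<le> avg_medoid_silhouette X d M" if "S \<subseteq> X" "card S = k" for S
    unfolding avg using Fle[OF that] GM[OF that] FM cX by (simp add: divide_right_mono)
  have lt: "avg_medoid_silhouette X d S < avg_medoid_silhouette X d M" if "S \<subseteq> X" "card S = k" "S \<noteq> M" for S
    unfolding avg using Flt[OF that] GM[OF that(1,2)] FM cX by (simp add: divide_strict_right_mono)
  show ?thesis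
  proof (intro exI conjI)
    show "dissimilarity X d" by (rule diss)
    show "{M'. M' \<subseteq> X \<and> card M' = k \<and>
                (\<forall>M''. M'' \<subseteq> X \<and> card M'' = k \<longrightarrow>
                   avg_medoid_silhouette X d M'' \<le> avg_medoid_silhouette X d M')} = {M}"
    proof (rule set_eqI, rule iffI)
      fix S assume "S \<in> {M'. M' \<subseteq> X \<and> card M' = k \<and>
                (\<forall>M''. M'' \<subseteq> X \<and> card M'' = k \<longrightarrow>
                   avg_medoid_silhouette X d M'' \<le> avg_medoid_silhouette X d M')}"
      then have S: "S \<subseteq> X" "card S = k" "avg_medoid_silhouette X d M \<le> avg_medoid_silhouette X d S"
        using assms by auto
      show "S \<in> {M}"
      proof (rule ccontr)
        assume "S \<notin> {M}"
        then show False using lt[OF S(1,2)] S(3) by auto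
      qed
    next
      fix S assume "S \<in> {M}"
      then show "S \<in> {M'. M' \<subseteq> X \<and> card M' = k \<and>
                (\<forall>M''. M'' \<subseteq> X \<and> card M'' = k \<longrightarrow>
                   avg_medoid_silhouette X d M'' \<le> avg_medoid_silhouette X d M')}"
        using assms le by auto
    qed
  qed
qed

end
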